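(* Let $L$ be a pretransitive logic. Then for all formulas $\varphi,\psi$: $$L[1]\vdash\Box^*\psi\to\Box^*\varphi\quad\text{iff}\quad L\vdash\Diamond^*\Box^*\psi\to\Diamond^*\Box^*\varphi.$$
   Context: Logics are normal $n$-modal logics. $\Diamond^0\varphi=\varphi$, $\Diamond^{i+1}\varphi=\Diamond^i(\bigvee_{j<n}\Diamond_j\varphi)$, $\Diamond^{\le m}\varphi=\bigvee_{i\le m}\Diamond^i\varphi$. $L$ is pretransitive if $L\vdash\Diamond^{m+1}p\to\Diamond^{\le m}p$ for some $m$; for the least such $m$ (for $L$), $\Diamond^*=\Diamond^{\le m}$ and $\Box^*=\neg\Diamond^*\neg$; these same abbreviations are used in $L[1]$. $B_1=p_1\to\Box^*(\Diamond^*p_1\vee\bot)$, and $L[1]$ is the smallest logic containing $L\cup\{B_1\}$. *)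

theory Defs
  imports Main
begin

datatype fm = Var nat | Bot | Imp fm fm | Box nat fm

fun wf :: "nat \<Rightarrow> fm \<Rightarrow> bool" where
  "wf n (Var k) = True"
| "wf n Bot = True"
| "wf n (Imp a b) = (wf n a \<and> wf n b)"
| "wf n (Box i a) = (i < n \<and> wf n a)"

definition Neg :: "fm \<Rightarrow> fm" where "Neg a = Imp a Bot"
definition Or :: "fm \<Rightarrow> fm \<Rightarrow> fm" where "Or a b = Imp (Neg a) b"
definition Dia :: "nat \<Rightarrow> fm \<Rightarrow> fm" where "Dia i a = Neg (Box i (Neg a))"

definition BigOr :: "fm list \<Rightarrow> fm" where "BigOr xs = foldr Or xs Bot"

fun subst :: "(nat \<Rightarrow> fm) \<Rightarrow> fm \<Rightarrow> fm" where
  "subst s (Var k) = s k"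
| "subst s Bot = Bot"
| "subst s (Imp a b) = Imp (subst s a) (subst s b)"
| "subst s (Box i a) = Box i (subst s a)"

definition normal_logic :: "nat \<Rightarrow> fm set \<Rightarrow> bool" where
  "normal_logic n L \<longleftrightarrow>
     (\<forall>a\<in>L. wf n a)
   \<and> (\<forall>a b. wf n a \<longrightarrow> wf n b \<longrightarrow> Imp a (Imp b a) \<in> L)
   \<and> (\<forall>a b c. wf n a \<longrightarrow> wf n b \<longrightarrow> wf n c \<longrightarrow>
        Imp (Imp a (Imp b c)) (Imp (Imp a b) (Imp a c)) \<in> L)
   \<and> (\<forall>a. wf n a \<longrightarrow> Imp (Neg (Neg a)) a \<in> L)
   \<and> (\<forall>i a b. i < n \<longrightarrow> wf n a \<longrightarrow> wf n b \<longrightarrow>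
        Imp (Box i (Imp a b)) (Imp (Box i a) (Box i b)) \<in> L)
   \<and> (\<forall>a b. a \<in> L \<longrightarrow> Imp a b \<in> L \<longrightarrow> b \<in> L)
   \<and> (\<forall>i a. i < n \<longrightarrow> a \<in> L \<longrightarrow> Box i a \<in> L)
   \<and> (\<forall>s a. (\<forall>k. wf n (s k)) \<longrightarrow> a \<in> L \<longrightarrow> subst s a \<in> L)"

definition dia_any :: "nat \<Rightarrow> fm \<Rightarrow> fm" where
  "dia_any n a = BigOr (map (\<lambda>j. Dia j a) [0..<n])"

fun dia_pow :: "nat \<Rightarrow> nat \<Rightarrow> fm \<Rightarrow> fm" where
  "dia_pow n 0 a = a"
| "dia_pow n (Suc i) a = dia_pow n i (dia_any n a)"

definition dia_le :: "nat \<Rightarrow> nat \<Rightarrow> fm \<Rightarrow> fm" where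
  "dia_le n m a = BigOr (map (\<lambda>i. dia_pow n i a) [0..<Suc m])"

definition pretrans_ax :: "nat \<Rightarrow> nat \<Rightarrow> fm" where
  "pretrans_ax n m = Imp (dia_pow n (Suc m) (Var 0)) (dia_le n m (Var 0))"

definition pretransitive :: "nat \<Rightarrow> fm set \<Rightarrow> bool" where
  "pretransitive n L \<longleftrightarrow> (\<exists>m. pretrans_ax n m \<in> L)"

definition pt_index :: "nat \<Rightarrow> fm set \<Rightarrow> nat" where
  "pt_index n L = (LEAST m. pretrans_ax n m \<in> L)"

definition DiaS :: "nat \<Rightarrow> fm set \<Rightarrow> fm \<Rightarrow> fm" where
  "DiaS n L a = dia_le n (pt_index n L) a"

definition BoxS :: "nat \<Rightarrow> fm set \<Rightarrow> fm \<Rightarrow> fm" where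
  "BoxS n L a = Neg (DiaS n L (Neg a))"

definition B1 :: "nat \<Rightarrow> fm set \<Rightarrow> fm" where
  "B1 n L = Imp (Var 1) (BoxS n L (Or (DiaS n L (Var 1)) Bot))"

text \<open>L[1]: smallest normal n-modal logic containing L and B1.\<close>
definition ext1 :: "nat \<Rightarrow> fm set \<Rightarrow> fm set" where
  "ext1 n L = \<Inter>{L'. normal_logic n L' \<and> L \<subseteq> L' \<and> B1 n L \<in> L'}"

end

theory Submission
  imports Defs
begin

lemma wf_Neg[simp]: "wf n (Neg a) = wf n a" by (simp add: Neg_def)
lemma wf_Or[simp]: "wf n (Or a b) = (wf n a \<and> wf n b)" by (simp add: Or_def)
lemma wf_Dia[simp]: "wf n (Dia i a) = (i < n \<and> wf n a)" by (simp add: Dia_def)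
lemma BigOr_Nil[simp]: "BigOr [] = Bot" by (simp add: BigOr_def)
lemma BigOr_Cons[simp]: "BigOr (a # xs) = Or a (BigOr xs)" by (simp add: BigOr_def)
lemma wf_BigOr[simp]: "wf n (BigOr xs) = (\<forall>a\<in>set xs. wf n a)"
  by (induction xs) auto
lemma wf_dia_any: "wf n a \<Longrightarrow> wf n (dia_any n a)"
  by (auto simp: dia_any_def)
lemma wf_dia_pow: "wf n a \<Longrightarrow> wf n (dia_pow n k a)"
  by (induction k arbitrary: a) (auto simp: wf_dia_any)
lemma wf_dia_le: "wf n a \<Longrightarrow> wf n (dia_le n k a)"
  by (auto simp: dia_le_def wf_dia_pow)

lemma subst_Neg[simp]: "subst s (Neg a) = Neg (subst s a)" by (simp add: Neg_def)
lemma subst_Or[simp]: "subst s (Or a b) = Or (subst s a) (subst s b)" by (simp add: Or_def)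
lemma subst_Dia[simp]: "subst s (Dia i a) = Dia i (subst s a)" by (simp add: Dia_def)
lemma subst_BigOr: "subst s (BigOr xs) = BigOr (map (subst s) xs)"
  by (induction xs) auto
lemma subst_dia_any: "subst s (dia_any n a) = dia_any n (subst s a)"
  by (simp add: dia_any_def subst_BigOr comp_def)
lemma subst_dia_pow: "subst s (dia_pow n k a) = dia_pow n k (subst s a)"
  by (induction k arbitrary: a) (auto simp: subst_dia_any)
lemma subst_dia_le: "subst s (dia_le n k a) = dia_le n k (subst s a)"
  by (simp add: dia_le_def subst_BigOr subst_dia_pow comp_def)
lemma wf_subst: "wf n a \<Longrightarrow> (\<And>k. wf n (s k)) \<Longrightarrow> wf n (subst s a)"
  by (induction a) auto
lemma subst_subst: "subst s' (subst s a) = subst (\<lambda>k. subst s' (s k)) a"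
  by (induction a) auto
lemma subst_Var: "subst Var a = a"
  by (induction a) auto

locale ml =
  fixes n :: nat and Lg :: "fm set" and m :: nat
  assumes nl: "normal_logic n Lg" and pt: "pretrans_ax n m \<in> Lg"
begin

lemma nl_parts: "(\<forall>a\<in>Lg. wf n a)
   \<and> (\<forall>a b. wf n a \<longrightarrow> wf n b \<longrightarrow> Imp a (Imp b a) \<in> Lg)
   \<and> (\<forall>a b c. wf n a \<longrightarrow> wf n b \<longrightarrow> wf n c \<longrightarrow>
        Imp (Imp a (Imp b c)) (Imp (Imp a b) (Imp a c)) \<in> Lg)
   \<and> (\<forall>a. wf n a \<longrightarrow> Imp (Neg (Neg a)) a \<in> Lg)
   \<and> (\<forall>i a b. i < n \<longrightarrow> wf n a \<longrightarrow> wf n b \<longrightarrow>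
        Imp (Box i (Imp a b)) (Imp (Box i a) (Box i b)) \<in> Lg)
   \<and> (\<forall>a b. a \<in> Lg \<longrightarrow> Imp a b \<in> Lg \<longrightarrow> b \<in> Lg)
   \<and> (\<forall>i a. i < n \<longrightarrow> a \<in> Lg \<longrightarrow> Box i a \<in> Lg)
   \<and> (\<forall>s a. (\<forall>k. wf n (s k)) \<longrightarrow> a \<in> Lg \<longrightarrow> subst s a \<in> Lg)"
  using nl unfolding normal_logic_def .

lemma L_wf: "a \<in> Lg \<Longrightarrow> wf n a" using conjunct1[OF nl_parts] by blast
lemma axK: "wf n a \<Longrightarrow> wf n b \<Longrightarrow> Imp a (Imp b a) \<in> Lg" using conjunct1[OF conjunct2[OF nl_parts]] by blast
lemma axS: "wf n a \<Longrightarrow> wf n b \<Longrightarrow> wf n c \<Longrightarrow> Imp (Imp a (Imp b c)) (Imp (Imp a b) (Imp a c)) \<in> Lg"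
  using conjunct1[OF conjunct2[OF conjunct2[OF nl_parts]]] by blast
lemma axDN: "wf n a \<Longrightarrow> Imp (Neg (Neg a)) a \<in> Lg" using conjunct1[OF conjunct2[OF conjunct2[OF conjunct2[OF nl_parts]]]] by blast
lemma axBox: "i < n \<Longrightarrow> wf n a \<Longrightarrow> wf n b \<Longrightarrow> Imp (Box i (Imp a b)) (Imp (Box i a) (Box i b)) \<in> Lg"
  using conjunct1[OF conjunct2[OF conjunct2[OF conjunct2[OF conjunct2[OF nl_parts]]]]] by blast
lemma mp: "a \<in> Lg \<Longrightarrow> Imp a b \<in> Lg \<Longrightarrow> b \<in> Lg" using conjunct1[OF conjunct2[OF conjunct2[OF conjunct2[OF conjunct2[OF conjunct2[OF nl_parts]]]]]] by blast
lemma nec: "i < n \<Longrightarrow> a \<in> Lg \<Longrightarrow> Box i a \<in> Lg" using conjunct1[OF conjunct2[OF conjunct2[OF conjunct2[OF conjunct2[OF conjunct2[OF conjunct2[OF nl_parts]]]]]]] by blast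
lemma sub: "(\<And>k. wf n (s k)) \<Longrightarrow> a \<in> Lg \<Longrightarrow> subst s a \<in> Lg" using conjunct2[OF conjunct2[OF conjunct2[OF conjunct2[OF conjunct2[OF conjunct2[OF conjunct2[OF nl_parts]]]]]]] by blast

lemma imp_refl: assumes a: "wf n a" shows "Imp a a \<in> Lg"
proof -
  have 1: "Imp (Imp a (Imp (Imp a a) a)) (Imp (Imp a (Imp a a)) (Imp a a)) \<in> Lg"
    using axS[of a "Imp a a" a] a by simp
  have 2: "Imp a (Imp (Imp a a) a) \<in> Lg" using axK[of a "Imp a a"] a by simp
  have 3: "Imp a (Imp a a) \<in> Lg" using axK[of a a] a by simp
  show ?thesis using mp[OF 3 mp[OF 2 1]] .
qed

inductive ded :: "fm set \<Rightarrow> fm \<Rightarrow> bool" for G where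
  dax: "a \<in> Lg \<Longrightarrow> ded G a"
| dhyp: "a \<in> G \<Longrightarrow> ded G a"
| dmp: "ded G (Imp a b) \<Longrightarrow> ded G a \<Longrightarrow> ded G b"

lemma ded_wf: "ded G a \<Longrightarrow> \<forall>g\<in>G. wf n g \<Longrightarrow> wf n a"
  by (induction rule: ded.induct) (auto simp: L_wf)

lemma ded_mono: "ded G a \<Longrightarrow> G \<subseteq> H \<Longrightarrow> ded H a"
  by (induction rule: ded.induct) (auto intro: ded.intros)

lemma ded_finite: "ded G a \<Longrightarrow> \<exists>D. finite D \<and> D \<subseteq> G \<and> ded D a"
proof (induction rule: ded.induct)
  case (dax a) then show ?case by (auto intro: ded.dax)
next
  case (dhyp a) then show ?case by (intro exI[of _ "{a}"]) (auto intro: ded.dhyp)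
next
  case (dmp a b)
  then obtain D1 D2 where "finite D1" "D1 \<subseteq> G" "ded D1 (Imp a b)" "finite D2" "D2 \<subseteq> G" "ded D2 a" by blast
  then show ?case
  proof (intro exI[of _ "D1 \<union> D2"] conjI)
    show "ded (D1 \<union> D2) b"
      using ded.dmp[OF ded_mono[OF \<open>ded D1 (Imp a b)\<close>] ded_mono[OF \<open>ded D2 a\<close>]] by blast
  qed (use \<open>finite D1\<close> \<open>finite D2\<close> \<open>D1 \<subseteq> G\<close> \<open>D2 \<subseteq> G\<close> in auto)
qed

lemma ded_empty: "ded {} a \<Longrightarrow> a \<in> Lg"
  by (induction rule: ded.induct) (auto intro: mp)

lemma deduction: "ded (insert a G) b \<Longrightarrow> wf n a \<Longrightarrow> \<forall>g\<in>G. wf n g \<Longrightarrow> ded G (Imp a b)"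
proof (induction rule: ded.induct)
  case (dax b)
  then show ?case using ded.dmp[OF ded.dax[OF axK[of b a]] ded.dax[of b]] L_wf by blast
next
  case (dhyp b)
  show ?case
  proof (cases "b = a")
    case True then show ?thesis using imp_refl dhyp ded.dax by blast
  next
    case False
    then have "b \<in> G" using dhyp by auto
    then show ?thesis using ded.dmp[OF ded.dax[OF axK[of b a]] ded.dhyp[of b]] dhyp by blast
  qed
next
  case (dmp b c)
  have w: "\<forall>g\<in>insert a G. wf n g" using dmp by auto
  have "wf n (Imp b c)" using ded_wf[OF dmp(1) w] .
  then have "wf n b" "wf n c" by auto
  then show ?case using ded.dmp[OF ded.dmp[OF ded.dax[OF axS[of a b c]]]] dmp by blast
qed

definition mcs :: "fm set \<Rightarrow> bool" where
  "mcs x \<longleftrightarrow> (\<forall>a\<in>x. wf n a) \<and> \<not> ded x Bot \<and> (\<forall>a. wf n a \<longrightarrow> a \<notin> x \<longrightarrow> ded (insert a x) Bot)"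

lemma lindenbaum:
  assumes "\<forall>a\<in>G. wf n a" "\<not> ded G Bot"
  shows "\<exists>x. mcs x \<and> G \<subseteq> x"
proof -
  define A where "A = {D. G \<subseteq> D \<and> (\<forall>a\<in>D. wf n a) \<and> \<not> ded D Bot}"
  have "\<forall>C\<in>chains A. \<exists>U\<in>A. \<forall>X\<in>C. X \<subseteq> U"
  proof
    fix C assume C: "C \<in> chains A"
    show "\<exists>U\<in>A. \<forall>X\<in>C. X \<subseteq> U"
    proof (cases "C = {}")
      case True then show ?thesis using assms by (auto simp: A_def)
    next
      case False
      have sc: "subset.chain A C" using C by (simp add: chains_def chain_subset_def subset_chain_def)
      have "\<not> ded (\<Union>C) Bot"
      proof
        assume "ded (\<Union>C) Bot"
        then obtain D where D: "finite D" "D \<subseteq> \<Union>C" "ded D Bot" using ded_finite by blast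
        then obtain B where "B \<in> C" "D \<subseteq> B" using finite_subset_Union_chain[OF D(1,2) False sc] by blast
        then have "ded B Bot" using D(3) ded_mono by blast
        then show False using \<open>B \<in> C\<close> C by (auto simp: chains_def A_def)
      qed
      moreover have "G \<subseteq> \<Union>C" "\<forall>a\<in>\<Union>C. wf n a" using False C by (auto simp: chains_def A_def)
      ultimately show ?thesis by (auto simp: A_def)
    qed
  qed
  from Zorn_Lemma2[OF this] obtain M where M: "M \<in> A" "\<forall>X\<in>A. M \<subseteq> X \<longrightarrow> X = M" by blast
  have "mcs M"
    unfolding mcs_def
  proof (intro conjI allI impI)
    fix a assume "wf n a" "a \<notin> M"
    show "ded (insert a M) Bot"
    proof (rule ccontr)
      assume "\<not> ded (insert a M) Bot"
      then have "insert a M \<in> A" using M(1) \<open>wf n a\<close> by (auto simp: A_def)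
      then show False using M(2) \<open>a \<notin> M\<close> by blast
    qed
  qed (use M(1) in \<open>auto simp: A_def\<close>)
  then show ?thesis using M(1) by (auto simp: A_def)
qed

context
  fixes x assumes x: "mcs x"
begin

lemma mcs_wf: "a \<in> x \<Longrightarrow> wf n a" using x by (auto simp: mcs_def)

lemma mcs_ded: "ded x a \<Longrightarrow> a \<in> x"
proof (rule ccontr)
  assume d: "ded x a" and "a \<notin> x"
  have w: "\<forall>g\<in>x. wf n g" using x by (auto simp: mcs_def)
  have "wf n a" using ded_wf[OF d w] .
  then have "ded (insert a x) Bot" using x \<open>a \<notin> x\<close> by (auto simp: mcs_def)
  then have "ded x (Imp a Bot)" using deduction w \<open>wf n a\<close> by blast
  then have "ded x Bot" using d ded.dmp by blast
  then show False using x by (auto simp: mcs_def)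
qed

lemma mcs_L: "a \<in> Lg \<Longrightarrow> a \<in> x" by (rule mcs_ded) (rule ded.dax)

lemma mcs_Bot: "Bot \<notin> x" using x ded.dhyp by (auto simp: mcs_def)

lemma mcs_Imp: assumes "wf n a" "wf n b" shows "Imp a b \<in> x \<longleftrightarrow> (a \<in> x \<longrightarrow> b \<in> x)"
proof
  assume "Imp a b \<in> x"
  then show "a \<in> x \<longrightarrow> b \<in> x" using mcs_ded by (meson ded.dhyp ded.dmp)
next
  assume h: "a \<in> x \<longrightarrow> b \<in> x"
  have w: "\<forall>g\<in>x. wf n g" using x by (auto simp: mcs_def)
  show "Imp a b \<in> x"
  proof (cases "a \<in> x")
    case True then show ?thesis using h assms by (meson axK ded.dax ded.dhyp ded.dmp mcs_ded)
  next
    case False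
    then have b: "ded (insert a x) Bot" using x assms by (auto simp: mcs_def)
    have "Imp Bot (Imp (Imp b Bot) Bot) \<in> Lg" using axK assms by auto
    then have "ded (insert a x) (Neg (Neg b))" using b unfolding Neg_def by (meson ded.dax ded.dmp)
    then have "ded (insert a x) b" using axDN[OF assms(2)] by (meson ded.dax ded.dmp)
    then show ?thesis using deduction w assms mcs_ded by blast
  qed
qed

lemma mcs_Neg: "wf n a \<Longrightarrow> Neg a \<in> x \<longleftrightarrow> a \<notin> x"
  using mcs_Imp mcs_Bot by (simp add: Neg_def)

lemma mcs_Or: "wf n a \<Longrightarrow> wf n b \<Longrightarrow> Or a b \<in> x \<longleftrightarrow> a \<in> x \<or> b \<in> x"
  using mcs_Imp mcs_Neg by (auto simp: Or_def)

lemma mcs_BigOr: "\<forall>a\<in>set xs. wf n a \<Longrightarrow> BigOr xs \<in> x \<longleftrightarrow> (\<exists>a\<in>set xs. a \<in> x)"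
  by (induction xs) (auto simp: mcs_Bot mcs_Or)

end


definition Rel :: "nat \<Rightarrow> fm set \<Rightarrow> fm set \<Rightarrow> bool" where
  "Rel i x y \<longleftrightarrow> (\<forall>a. Box i a \<in> x \<longrightarrow> a \<in> y)"

lemma boxlist:
  assumes x: "mcs x" and i: "i < n"
  shows "\<forall>b\<in>set bs. Box i b \<in> x \<Longrightarrow> ded (set bs) c \<Longrightarrow> Box i c \<in> x"
proof (induction bs arbitrary: c)
  case Nil
  then show ?case using ded_empty nec i mcs_L[OF x] by auto
next
  case (Cons b bs)
  have wb: "\<forall>g\<in>set (b # bs). wf n g" using Cons.prems mcs_wf[OF x] by force
  have wc: "wf n c" using ded_wf[OF Cons.prems(2) wb] .
  have "ded (set bs) (Imp b c)" using deduction[of b "set bs" c] Cons.prems wb by auto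
  then have "Box i (Imp b c) \<in> x" using Cons by auto
  moreover have "Imp (Box i (Imp b c)) (Imp (Box i b) (Box i c)) \<in> x"
    using axBox[OF i] wb wc mcs_L[OF x] by auto
  ultimately show ?case using Cons.prems mcs_Imp[OF x] wb wc i by auto
qed

lemma mcs_Box:
  assumes x: "mcs x" and i: "i < n" and a: "wf n a"
  shows "Box i a \<in> x \<longleftrightarrow> (\<forall>y. mcs y \<longrightarrow> Rel i x y \<longrightarrow> a \<in> y)"
proof
  assume "Box i a \<in> x" then show "\<forall>y. mcs y \<longrightarrow> Rel i x y \<longrightarrow> a \<in> y" by (auto simp: Rel_def)
next
  assume h: "\<forall>y. mcs y \<longrightarrow> Rel i x y \<longrightarrow> a \<in> y"
  show "Box i a \<in> x"
  proof (rule ccontr)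
    assume nb: "Box i a \<notin> x"
    define G where "G = insert (Neg a) {b. Box i b \<in> x}"
    have wG: "\<forall>g\<in>G. wf n g"
    proof
      fix g assume "g \<in> G"
      then have "g = Neg a \<or> Box i g \<in> x" by (simp add: G_def)
      then show "wf n g" using mcs_wf[OF x, of "Box i g"] a by auto
    qed
    have "\<not> ded G Bot"
    proof
      assume "ded G Bot"
      then obtain D where D: "finite D" "D \<subseteq> G" "ded D Bot" using ded_finite by blast
      let ?D = "D - {Neg a}"
      have "D \<subseteq> insert (Neg a) ?D" by blast
      then have d1: "ded (insert (Neg a) ?D) Bot" using D(3) ded_mono by blast
      have w: "\<forall>g\<in>?D. wf n g" using D(2) wG by blast
      have "ded ?D (Imp (Neg a) Bot)" using deduction[OF d1 _ w] a by simp
      moreover have "ded ?D (Imp (Imp (Neg a) Bot) a)" using axDN[OF a] ded.dax unfolding Neg_def[of "Neg a"] by blast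
      ultimately have "ded ?D a" using ded.dmp by blast
      moreover obtain bs where bs: "set bs = ?D" using finite_list[of ?D] D(1) by blast
      moreover have "\<forall>b\<in>?D. Box i b \<in> x" using D(2) by (auto simp: G_def)
      ultimately have "Box i a \<in> x" using boxlist[OF x i, of bs a] by simp
      then show False using nb by simp
    qed
    then obtain y where y: "mcs y" "G \<subseteq> y" using lindenbaum[OF wG] by blast
    then have "Rel i x y" unfolding Rel_def G_def by blast
    then have "a \<in> y" using h y(1) by blast
    moreover have "Neg a \<in> y" using y(2) unfolding G_def by blast
    ultimately show False using mcs_Neg[OF y(1) a] by simp
  qed
qed

lemma mcs_Dia:
  assumes x: "mcs x" and i: "i < n" and a: "wf n a"
  shows "Dia i a \<in> x \<longleftrightarrow> (\<exists>y. mcs y \<and> Rel i x y \<and> a \<in> y)"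
proof -
  have "Dia i a \<in> x \<longleftrightarrow> Box i (Neg a) \<notin> x" unfolding Dia_def using mcs_Neg[OF x] i a by simp
  also have "\<dots> \<longleftrightarrow> \<not>(\<forall>y. mcs y \<longrightarrow> Rel i x y \<longrightarrow> Neg a \<in> y)" using mcs_Box[OF x i] a by simp
  also have "\<dots> \<longleftrightarrow> (\<exists>y. mcs y \<and> Rel i x y \<and> a \<in> y)" using mcs_Neg[OF _ a] by blast
  finally show ?thesis .
qed

definition RR :: "fm set \<Rightarrow> fm set \<Rightarrow> bool" where
  "RR x y \<longleftrightarrow> (\<exists>i<n. Rel i x y)"

lemma mcs_dia_any:
  assumes x: "mcs x" and a: "wf n a"
  shows "dia_any n a \<in> x \<longleftrightarrow> (\<exists>y. mcs y \<and> RR x y \<and> a \<in> y)"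
proof -
  have 1: "dia_any n a \<in> x \<longleftrightarrow> (\<exists>j<n. Dia j a \<in> x)" using mcs_BigOr[OF x] a by (auto simp: dia_any_def)
  show ?thesis unfolding 1 RR_def using mcs_Dia[OF x _ a] by blast
qed

fun path :: "nat \<Rightarrow> fm set \<Rightarrow> fm set \<Rightarrow> bool" where
  "path 0 x y = (x = y)"
| "path (Suc k) x z = (\<exists>y. path k x y \<and> mcs y \<and> RR y z \<and> mcs z)"

lemma path_mcs: "path k x y \<Longrightarrow> mcs x \<Longrightarrow> mcs y"
  by (cases k) auto

lemma mcs_dia_pow:
  assumes x: "mcs x"
  shows "wf n a \<Longrightarrow> dia_pow n k a \<in> x \<longleftrightarrow> (\<exists>y. path k x y \<and> a \<in> y)"
proof (induction k arbitrary: a)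
  case 0 then show ?case by simp
next
  case (Suc k)
  have "dia_pow n (Suc k) a \<in> x \<longleftrightarrow> (\<exists>y. path k x y \<and> dia_any n a \<in> y)"
    using Suc.IH[of "dia_any n a"] wf_dia_any[OF Suc.prems] by simp
  also have "\<dots> \<longleftrightarrow> (\<exists>y z. path k x y \<and> mcs y \<and> RR y z \<and> mcs z \<and> a \<in> z)"
    using mcs_dia_any[OF _ Suc.prems] path_mcs[OF _ x] by blast
  also have "\<dots> \<longleftrightarrow> (\<exists>z. path (Suc k) x z \<and> a \<in> z)" by auto
  finally show ?case .
qed

lemma path_add: "path (i + j) x z \<longleftrightarrow> (\<exists>y. path i x y \<and> path j y z)"
  by (induction j arbitrary: z) auto

lemma mcs_dia_le:
  assumes x: "mcs x" and a: "wf n a"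
  shows "dia_le n k a \<in> x \<longleftrightarrow> (\<exists>j\<le>k. \<exists>y. path j x y \<and> a \<in> y)"
proof -
  have "dia_le n k a \<in> x \<longleftrightarrow> (\<exists>j\<in>set [0..<Suc k]. dia_pow n j a \<in> x)"
    unfolding dia_le_def using mcs_BigOr[OF x] wf_dia_pow[OF a] by auto
  also have "\<dots> \<longleftrightarrow> (\<exists>j\<le>k. dia_pow n j a \<in> x)"
    unfolding set_upt by (meson atLeastLessThan_iff le0 less_Suc_eq_le)
  also have "\<dots> \<longleftrightarrow> (\<exists>j\<le>k. \<exists>y. path j x y \<and> a \<in> y)"
    using mcs_dia_pow[OF x a] by simp
  finally show ?thesis .
qed

lemma pt_sem:
  assumes x: "mcs x" and a: "wf n a" and p: "path (Suc m) x y" and ay: "a \<in> y"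
  shows "\<exists>j\<le>m. \<exists>y'. path j x y' \<and> a \<in> y'"
proof -
  have "subst (\<lambda>_. a) (pretrans_ax n m) \<in> Lg" using sub pt a by auto
  then have "Imp (dia_pow n (Suc m) a) (dia_le n m a) \<in> x"
    using mcs_L[OF x] by (simp add: pretrans_ax_def subst_dia_pow subst_dia_le subst_dia_any)
  moreover have "dia_pow n (Suc m) a \<in> x" using mcs_dia_pow[OF x a] p ay by blast
  ultimately have "dia_le n m a \<in> x"
    using mcs_Imp[OF x] wf_dia_pow[OF a] wf_dia_le[OF a] by blast
  then show ?thesis using mcs_dia_le[OF x a] by blast
qed

lemma reduce:
  assumes a: "wf n a"
  shows "mcs x \<Longrightarrow> path j x z \<Longrightarrow> a \<in> z \<Longrightarrow> \<exists>k\<le>m. \<exists>y. path k x y \<and> a \<in> y"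
proof (induction j arbitrary: x z rule: less_induct)
  case (less j)
  show ?case
  proof (cases "j \<le> m")
    case True then show ?thesis using less.prems by blast
  next
    case False
    then obtain r where r: "j = r + Suc m" by (metis add.commute le_Suc_ex not_less_eq_eq)
    then obtain u where u: "path r x u" "path (Suc m) u z" using path_add less.prems(2) by blast
    have mu: "mcs u" using path_mcs u(1) less.prems(1) by blast
    obtain k' w where kw: "k' \<le> m" "path k' u w" "a \<in> w" using pt_sem[OF mu a u(2) less.prems(3)] by blast
    have "path (r + k') x w" using path_add u(1) kw(2) by blast
    moreover have "r + k' < j" using r kw(1) by simp
    ultimately show ?thesis using less.IH less.prems(1) kw(3) by blast
  qed
qed

definition reach :: "fm set \<Rightarrow> fm set \<Rightarrow> bool" where
  "reach x y \<longleftrightarrow> (\<exists>k. path k x y)"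

abbreviation DS where "DS a \<equiv> dia_le n m a"
abbreviation BS where "BS a \<equiv> Neg (dia_le n m (Neg a))"

lemma wf_BS: "wf n a \<Longrightarrow> wf n (BS a)" by (simp add: wf_dia_le)

lemma reach_refl: "reach x x" by (auto simp: reach_def intro: exI[of _ 0])
lemma reach_trans: "reach x y \<Longrightarrow> reach y z \<Longrightarrow> reach x z"
  unfolding reach_def using path_add by blast
lemma reach_mcs: "reach x y \<Longrightarrow> mcs x \<Longrightarrow> mcs y"
  unfolding reach_def using path_mcs by blast

lemma mcs_DS:
  assumes x: "mcs x" and a: "wf n a"
  shows "DS a \<in> x \<longleftrightarrow> (\<exists>y. reach x y \<and> a \<in> y)"
  unfolding mcs_dia_le[OF x a] reach_def using reduce[OF a x] by blast

lemma mcs_BS: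
  assumes x: "mcs x" and a: "wf n a"
  shows "BS a \<in> x \<longleftrightarrow> (\<forall>y. reach x y \<longrightarrow> a \<in> y)"
proof -
  have "BS a \<in> x \<longleftrightarrow> DS (Neg a) \<notin> x" using mcs_Neg[OF x] wf_dia_le a by simp
  also have "\<dots> \<longleftrightarrow> \<not>(\<exists>y. reach x y \<and> Neg a \<in> y)" using mcs_DS[OF x] a by simp
  also have "\<dots> \<longleftrightarrow> (\<forall>y. reach x y \<longrightarrow> a \<in> y)" using reach_mcs[OF _ x] mcs_Neg[OF _ a] by blast
  finally show ?thesis .
qed

lemma Rel_reach: "Rel i x y \<Longrightarrow> i < n \<Longrightarrow> mcs x \<Longrightarrow> mcs y \<Longrightarrow> reach x y"
  unfolding reach_def by (intro exI[of _ 1]) (auto simp: RR_def)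

definition sq :: "fm set \<Rightarrow> fm set \<Rightarrow> bool" where
  "sq x y \<longleftrightarrow> (\<forall>a. wf n a \<longrightarrow> BS a \<in> x \<longrightarrow> a \<in> y)"

lemma reach_sq: "mcs x \<Longrightarrow> reach x y \<Longrightarrow> sq x y"
  unfolding sq_def using mcs_BS by blast

lemma sq_refl: "mcs x \<Longrightarrow> sq x x" using reach_sq reach_refl by blast

lemma BS4: "mcs x \<Longrightarrow> wf n a \<Longrightarrow> BS a \<in> x \<Longrightarrow> BS (BS a) \<in> x"
proof -
  assume x: "mcs x" and a: "wf n a" and b: "BS a \<in> x"
  have "\<forall>y. reach x y \<longrightarrow> BS a \<in> y"
  proof (intro allI impI)
    fix y assume r: "reach x y"
    have "\<forall>z. reach y z \<longrightarrow> a \<in> z" using mcs_BS[OF x a] b reach_trans[OF r] by blast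
    then show "BS a \<in> y" using mcs_BS[OF reach_mcs[OF r x] a] by blast
  qed
  then show ?thesis using mcs_BS[OF x wf_BS[OF a]] by blast
qed

lemma sq_trans: "mcs x \<Longrightarrow> sq x y \<Longrightarrow> sq y z \<Longrightarrow> sq x z"
  unfolding sq_def using BS4 wf_BS by blast

lemma DS_exists: "mcs x \<Longrightarrow> wf n a \<Longrightarrow> DS a \<in> x \<Longrightarrow> \<exists>y. mcs y \<and> sq x y \<and> a \<in> y"
  using mcs_DS reach_sq reach_mcs by blast

lemma sq_DS:
  assumes x: "mcs x" and y: "mcs y" and s: "sq x y" and a: "wf n a" and ay: "a \<in> y"
  shows "DS a \<in> x"
proof (rule ccontr)
  assume "DS a \<notin> x"
  then have "\<forall>y. reach x y \<longrightarrow> Neg a \<in> y" using mcs_DS[OF x a] mcs_Neg[OF _ a] reach_mcs[OF _ x] by blast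
  then have "BS (Neg a) \<in> x" using mcs_BS[OF x] a by simp
  then have "Neg a \<in> y" using s a by (simp add: sq_def)
  then show False using mcs_Neg[OF y a] ay by simp
qed

definition Bx :: "fm set \<Rightarrow> fm set" where "Bx x = {a. wf n a \<and> BS a \<in> x}"

lemma final_exists:
  assumes y: "mcs y"
  shows "\<exists>z. mcs z \<and> sq y z \<and> (\<forall>w. mcs w \<longrightarrow> sq z w \<longrightarrow> sq w z)"
proof -
  define A where "A = {Bx w | w. mcs w \<and> sq y w}"
  have "\<forall>C\<in>chains A. \<exists>U\<in>A. \<forall>X\<in>C. X \<subseteq> U"
  proof
    fix C assume C: "C \<in> chains A"
    show "\<exists>U\<in>A. \<forall>X\<in>C. X \<subseteq> U"
    proof (cases "C = {}")
      case True then show ?thesis using y sq_refl by (auto simp: A_def)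
    next
      case False
      have sc: "subset.chain A C" using C by (simp add: chains_def chain_subset_def subset_chain_def)
      have CA: "C \<subseteq> A" using C by (simp add: chains_def)
      have "\<not> ded (\<Union>C) Bot"
      proof
        assume "ded (\<Union>C) Bot"
        then obtain D where D: "finite D" "D \<subseteq> \<Union>C" "ded D Bot" using ded_finite by blast
        then obtain B where "B \<in> C" "D \<subseteq> B" using finite_subset_Union_chain[OF D(1,2) False sc] by blast
        then obtain w where w: "B = Bx w" "mcs w" using CA by (auto simp: A_def)
        have "B \<subseteq> w" using w sq_refl[OF w(2)] by (auto simp: Bx_def sq_def)
        then have "ded w Bot" using D(3) ded_mono \<open>D \<subseteq> B\<close> by blast
        then show False using w(2) by (auto simp: mcs_def)
      qed
      moreover have "\<forall>a\<in>\<Union>C. wf n a" using CA by (auto simp: A_def Bx_def)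
      ultimately obtain u where u: "mcs u" "\<Union>C \<subseteq> u" using lindenbaum by blast
      have "\<forall>X\<in>C. X \<subseteq> Bx u \<and> (\<exists>w. mcs w \<and> sq y w \<and> sq w u)"
      proof
        fix X assume "X \<in> C"
        then obtain w where w: "X = Bx w" "mcs w" "sq y w" using CA by (auto simp: A_def)
        have swu: "sq w u" using u(2) \<open>X \<in> C\<close> w(1) by (auto simp: sq_def Bx_def)
        have "X \<subseteq> Bx u" using w(1) swu BS4[OF w(2)] wf_BS by (auto simp: Bx_def sq_def)
        then show "X \<subseteq> Bx u \<and> (\<exists>w. mcs w \<and> sq y w \<and> sq w u)" using w swu by blast
      qed
      moreover have "Bx u \<in> A"
      proof -
        obtain X where "X \<in> C" using False by blast
        then obtain w where "mcs w" "sq y w" "sq w u" using calculation by blast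
        then have "sq y u" using sq_trans y by blast
        then show ?thesis using u(1) by (auto simp: A_def)
      qed
      ultimately show ?thesis by blast
    qed
  qed
  from Zorn_Lemma2[OF this] obtain M where M: "M \<in> A" "\<forall>X\<in>A. M \<subseteq> X \<longrightarrow> X = M" by blast
  then obtain z where z: "M = Bx z" "mcs z" "sq y z" by (auto simp: A_def)
  have "\<forall>w. mcs w \<longrightarrow> sq z w \<longrightarrow> sq w z"
  proof (intro allI impI)
    fix w assume w: "mcs w" "sq z w"
    then have "Bx w \<in> A" using sq_trans[OF y z(3)] by (auto simp: A_def)
    moreover have "Bx z \<subseteq> Bx w" using w(2) BS4[OF z(2)] wf_BS by (auto simp: Bx_def sq_def)
    ultimately have "Bx w = Bx z" using M z(1) by blast
    show "sq w z" unfolding sq_def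
    proof (intro allI impI)
      fix a assume "wf n a" "BS a \<in> w"
      then have "a \<in> Bx z" using \<open>Bx w = Bx z\<close> by (auto simp: Bx_def)
      then show "a \<in> z" using sq_refl[OF z(2)] by (auto simp: Bx_def sq_def)
    qed
  qed
  then show ?thesis using z by blast
qed

lemma in_all_mcs: "wf n a \<Longrightarrow> (\<And>x. mcs x \<Longrightarrow> a \<in> x) \<Longrightarrow> a \<in> Lg"
proof (rule ccontr)
  assume a: "wf n a" and h: "\<And>x. mcs x \<Longrightarrow> a \<in> x" and na: "a \<notin> Lg"
  have "\<not> ded {Neg a} Bot"
  proof
    assume "ded {Neg a} Bot"
    then have "ded {} (Imp (Neg a) Bot)" using deduction a by auto
    then have "ded {} a" using axDN[OF a] unfolding Neg_def[of "Neg a"] by (meson ded.dax ded.dmp)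
    then show False using ded_empty na by blast
  qed
  then have "\<exists>x. mcs x \<and> {Neg a} \<subseteq> x" using a by (intro lindenbaum) auto
  then obtain x where "mcs x" "Neg a \<in> x" by auto
  then show False using h mcs_Neg a by blast
qed

end


lemma pt_m: assumes "pretransitive n L" shows "pretrans_ax n (pt_index n L) \<in> L"
  using assms unfolding pretransitive_def pt_index_def by (rule LeastI_ex)

lemma subst_B1:
  "subst s (B1 n L) = Imp (s 1) (Neg (dia_le n (pt_index n L) (Neg (Or (dia_le n (pt_index n L) (s 1)) Bot))))"
  by (simp add: B1_def BoxS_def DiaS_def subst_dia_le)

lemma wf_B1: "wf n (B1 n L)"
  by (simp add: B1_def BoxS_def DiaS_def wf_dia_le)

lemma dir2:
  assumes nl: "normal_logic n L" and pt: "pretrans_ax n m \<in> L" and mdef: "m = pt_index n L"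
    and wphi: "wf n \<phi>" and wpsi: "wf n \<psi>"
    and H: "Imp (dia_le n m (Neg (dia_le n m (Neg \<psi>)))) (dia_le n m (Neg (dia_le n m (Neg \<phi>)))) \<in> L"
  shows "Imp (Neg (dia_le n m (Neg \<psi>))) (Neg (dia_le n m (Neg \<phi>))) \<in> ext1 n L"
  unfolding ext1_def
proof (rule InterI)
  fix L' assume "L' \<in> {L'. normal_logic n L' \<and> L \<subseteq> L' \<and> B1 n L \<in> L'}"
  then have nl': "normal_logic n L'" and sub': "L \<subseteq> L'" and b1: "B1 n L \<in> L'" by auto
  interpret ml n L' m using nl' pt sub' by unfold_locales auto
  define P where "P = Neg (dia_le n m (Neg \<psi>))"
  define Q where "Q = Neg (dia_le n m (Neg \<phi>))"
  have wP: "wf n P" and wQ: "wf n Q" using wphi wpsi by (auto simp: P_def Q_def wf_dia_le)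
  show "Imp P Q \<in> L'"
  proof (rule in_all_mcs)
    show "wf n (Imp P Q)" using wP wQ by simp
  next
    fix x assume x: "mcs x"
    show "Imp P Q \<in> x" unfolding mcs_Imp[OF x wP wQ]
    proof
      assume "P \<in> x"
      then have "dia_le n m P \<in> x" using mcs_DS[OF x wP] reach_refl by blast
      moreover have "Imp (dia_le n m P) (dia_le n m Q) \<in> x" using H sub' mcs_L[OF x] by (auto simp: P_def Q_def)
      ultimately have "dia_le n m Q \<in> x" using mcs_Imp[OF x] wf_dia_le wP wQ by blast
      then obtain y where y: "reach x y" "Q \<in> y" using mcs_DS[OF x wQ] by blast
      have my: "mcs y" using reach_mcs[OF y(1) x] .
      show "Q \<in> x"
      proof (rule ccontr)
        assume "Q \<notin> x"
        define p where "p = dia_le n m (Neg \<phi>)"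
        have wp: "wf n p" using wphi by (simp add: p_def wf_dia_le)
        have px: "p \<in> x" using \<open>Q \<notin> x\<close> mcs_Neg[OF x wp] by (simp add: Q_def p_def)
        have "subst (\<lambda>_. p) (B1 n L) \<in> L'" by (rule sub[OF _ b1]) (simp add: wp)
        then have "Imp p (Neg (dia_le n m (Neg (Or (dia_le n m p) Bot)))) \<in> x"
          using mcs_L[OF x] by (simp add: subst_B1 mdef)
        then have "Neg (dia_le n m (Neg (Or (dia_le n m p) Bot))) \<in> x"
          using mcs_Imp[OF x] px wp wf_dia_le by simp
        then have "Or (dia_le n m p) Bot \<in> y" using mcs_BS[OF x] wp wf_dia_le y(1) by simp
        then have "dia_le n m p \<in> y" using mcs_Or[OF my] mcs_Bot[OF my] wp wf_dia_le by simp
        then obtain u where u: "reach y u" "p \<in> u" using mcs_DS[OF my wp] by blast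
        then obtain v where v: "reach u v" "Neg \<phi> \<in> v" using mcs_DS[OF reach_mcs[OF u(1) my]] wphi by (auto simp: p_def)
        have "reach y v" using reach_trans u(1) v(1) by blast
        then have "p \<in> y" using mcs_DS[OF my] wphi v(2) by (auto simp: p_def)
        then show False using y(2) mcs_Neg[OF my wp] by (simp add: Q_def p_def)
      qed
    qed
  qed
qed

lemma dir1:
  assumes nl: "normal_logic n L" and pt: "pretrans_ax n m \<in> L" and mdef: "m = pt_index n L"
    and wphi: "wf n \<phi>" and wpsi: "wf n \<psi>"
    and E: "Imp (Neg (dia_le n m (Neg \<psi>))) (Neg (dia_le n m (Neg \<phi>))) \<in> ext1 n L"
  shows "Imp (dia_le n m (Neg (dia_le n m (Neg \<psi>)))) (dia_le n m (Neg (dia_le n m (Neg \<phi>)))) \<in> L"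
proof -
  interpret ml n L m using nl pt by unfold_locales
  define P where "P = Neg (dia_le n m (Neg \<psi>))"
  define Q where "Q = Neg (dia_le n m (Neg \<phi>))"
  have wP: "wf n P" and wQ: "wf n Q" using wphi wpsi by (auto simp: P_def Q_def wf_dia_le)
  have wH: "wf n (Imp (dia_le n m P) (dia_le n m Q))" using wP wQ wf_dia_le by simp
  show ?thesis
  proof (rule ccontr)
    assume "\<not> ?thesis"
    then have "Imp (dia_le n m P) (dia_le n m Q) \<notin> L" by (simp add: P_def Q_def)
    then obtain x0 where x0: "mcs x0" "Imp (dia_le n m P) (dia_le n m Q) \<notin> x0"
      using in_all_mcs[OF wH] by blast
    have d1: "dia_le n m P \<in> x0" and d2: "dia_le n m Q \<notin> x0"
      using x0 mcs_Imp[OF x0(1)] wP wQ wf_dia_le by auto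
    obtain y where y: "mcs y" "sq x0 y" "P \<in> y" using DS_exists[OF x0(1) wP d1] by blast
    obtain z where z: "mcs z" "sq y z" "\<forall>w. mcs w \<longrightarrow> sq z w \<longrightarrow> sq w z" using final_exists[OF y(1)] by blast
    have "Neg (dia_le n m (Neg P)) \<in> y" using BS4[OF y(1) wpsi] y(3) by (simp add: P_def)
    then have Pz: "P \<in> z" using z(2) wP by (simp add: sq_def)
    have Qz: "Q \<notin> z"
    proof
      assume "Q \<in> z"
      have "sq x0 z" using sq_trans[OF x0(1) y(2) z(2)] .
      then have "dia_le n m Q \<in> x0" using sq_DS[OF x0(1) z(1) _ wQ \<open>Q \<in> z\<close>] by blast
      then show False using d2 by simp
    qed
    define L2 where "L2 = {a. wf n a \<and> (\<forall>s::nat \<Rightarrow> fm. (\<forall>k. wf n (s k)) \<longrightarrow> (\<forall>w. mcs w \<longrightarrow> sq z w \<longrightarrow> subst s a \<in> w))}"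
    have inL: "a \<in> L \<Longrightarrow> mcs w \<Longrightarrow> a \<in> w" for a w using mcs_L by blast
    have n1: "\<forall>a\<in>L2. wf n a" by (simp add: L2_def)
    have n2: "\<forall>a b. wf n a \<longrightarrow> wf n b \<longrightarrow> Imp a (Imp b a) \<in> L2"
      unfolding L2_def using inL axK wf_subst by simp
    have n3: "\<forall>a b c. wf n a \<longrightarrow> wf n b \<longrightarrow> wf n c \<longrightarrow>
        Imp (Imp a (Imp b c)) (Imp (Imp a b) (Imp a c)) \<in> L2"
      unfolding L2_def using inL axS wf_subst by simp
    have n4: "\<forall>a. wf n a \<longrightarrow> Imp (Neg (Neg a)) a \<in> L2"
      unfolding L2_def using inL axDN wf_subst by simp
    have n5: "\<forall>i a b. i < n \<longrightarrow> wf n a \<longrightarrow> wf n b \<longrightarrow>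
        Imp (Box i (Imp a b)) (Imp (Box i a) (Box i b)) \<in> L2"
      unfolding L2_def using inL axBox wf_subst by simp
    have n6: "\<forall>a b. a \<in> L2 \<longrightarrow> Imp a b \<in> L2 \<longrightarrow> b \<in> L2"
    proof (intro allI impI)
      fix a b assume a: "a \<in> L2" and ab: "Imp a b \<in> L2"
      have wa: "wf n a" and wb: "wf n b" using ab by (auto simp: L2_def)
      show "b \<in> L2" unfolding L2_def
      proof (intro CollectI conjI allI impI)
        fix s :: "nat \<Rightarrow> fm" and w assume s: "\<forall>k. wf n (s k)" and w: "mcs w" "sq z w"
        have "subst s a \<in> w" "Imp (subst s a) (subst s b) \<in> w"
          using a ab s w by (auto simp: L2_def)
        then show "subst s b \<in> w" using mcs_Imp[OF w(1) wf_subst[OF wa] wf_subst[OF wb]] s by blast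
      qed (rule wb)
    qed
    have n7: "\<forall>i a. i < n \<longrightarrow> a \<in> L2 \<longrightarrow> Box i a \<in> L2"
    proof (intro allI impI)
      fix i a assume i: "i < n" and a: "a \<in> L2"
      have wa: "wf n a" using a by (auto simp: L2_def)
      show "Box i a \<in> L2" unfolding L2_def
      proof (intro CollectI conjI allI impI)
        fix s :: "nat \<Rightarrow> fm" and w assume s: "\<forall>k. wf n (s k)" and w: "mcs w" "sq z w"
        have "\<forall>y. mcs y \<longrightarrow> Rel i w y \<longrightarrow> subst s a \<in> y"
        proof (intro allI impI)
          fix y assume y: "mcs y" "Rel i w y"
          have "sq w y" using reach_sq[OF w(1) Rel_reach[OF y(2) i w(1) y(1)]] .
          then have "sq z y" using sq_trans[OF z(1) w(2)] by blast
          then show "subst s a \<in> y" using a s y(1) by (auto simp: L2_def)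
        qed
        then show "subst s (Box i a) \<in> w" using mcs_Box[OF w(1) i wf_subst[OF wa]] s by simp
      qed (use i wa in simp)
    qed
    have n8: "\<forall>s a. (\<forall>k. wf n (s k)) \<longrightarrow> a \<in> L2 \<longrightarrow> subst s a \<in> L2"
    proof (intro allI impI)
      fix s :: "nat \<Rightarrow> fm" and a assume s: "\<forall>k. wf n (s k)" and a: "a \<in> L2"
      have wa: "wf n a" using a by (auto simp: L2_def)
      show "subst s a \<in> L2" unfolding L2_def
      proof (intro CollectI conjI allI impI)
        fix s' :: "nat \<Rightarrow> fm" and w assume s': "\<forall>k. wf n (s' k)" and w: "mcs w" "sq z w"
        have "\<forall>k. wf n (subst s' (s k))" using s s' wf_subst by blast
        then show "subst s' (subst s a) \<in> w" unfolding subst_subst using a w by (auto simp: L2_def)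
      qed (use wa s wf_subst in blast)
    qed
    have nL2: "normal_logic n L2" unfolding normal_logic_def
      using n1 n2 n3 n4 n5 n6 n7 n8 by blast
    have LL2: "L \<subseteq> L2"
    proof
      fix a assume a: "a \<in> L"
      show "a \<in> L2" unfolding L2_def using a L_wf sub inL by blast
    qed
    have B2: "B1 n L \<in> L2" unfolding L2_def
    proof (intro CollectI conjI allI impI)
      fix s :: "nat \<Rightarrow> fm" and w assume s: "\<forall>k. wf n (s k)" and w: "mcs w" "sq z w"
      define p where "p = s 1"
      have wp: "wf n p" using s by (simp add: p_def)
      define c where "c = Or (dia_le n m p) Bot"
      have wc: "wf n c" using wp wf_dia_le by (simp add: c_def)
      have "p \<in> w \<longrightarrow> Neg (dia_le n m (Neg c)) \<in> w"
      proof
        assume pw: "p \<in> w"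
        have "\<forall>u. reach w u \<longrightarrow> c \<in> u"
        proof (intro allI impI)
          fix u assume r: "reach w u"
          have mu: "mcs u" using reach_mcs[OF r w(1)] .
          have "sq z u" using sq_trans[OF z(1) w(2) reach_sq[OF w(1) r]] .
          then have "sq u z" using z(3) mu by blast
          then have "sq u w" using sq_trans[OF mu _ w(2)] by blast
          then have "dia_le n m p \<in> u" using sq_DS[OF mu w(1) _ wp pw] by blast
          then show "c \<in> u" using mcs_Or[OF mu] wp wf_dia_le by (simp add: c_def)
        qed
        then show "Neg (dia_le n m (Neg c)) \<in> w" using mcs_BS[OF w(1) wc] by blast
      qed
      then show "subst s (B1 n L) \<in> w"
        using mcs_Imp[OF w(1)] wp wc wf_dia_le by (simp add: subst_B1 mdef[symmetric] p_def c_def)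
    qed (rule wf_B1)
    have "ext1 n L \<subseteq> L2" unfolding ext1_def using nL2 LL2 B2 by blast
    then have "Imp P Q \<in> L2" using E by (auto simp: P_def Q_def)
    then have "subst Var (Imp P Q) \<in> z" using z(1) sq_refl[OF z(1)] by (auto simp: L2_def)
    then have "Imp P Q \<in> z" by (simp add: subst_Var)
    then show False using mcs_Imp[OF z(1) wP wQ] Pz Qz by blast
  qed
qed

theorem theorem3p6:
  fixes n :: nat and L :: "fm set" and \<phi> \<psi> :: fm
  assumes "normal_logic n L" and "pretransitive n L"
    and "wf n \<phi>" and "wf n \<psi>"
  shows "Imp (BoxS n L \<psi>) (BoxS n L \<phi>) \<in> ext1 n L \<longleftrightarrow>
         Imp (DiaS n L (BoxS n L \<psi>)) (DiaS n L (BoxS n L \<phi>)) \<in> L"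
  unfolding BoxS_def DiaS_def
  using dir1[OF assms(1) pt_m[OF assms(2)] refl assms(3,4)]
        dir2[OF assms(1) pt_m[OF assms(2)] refl assms(3,4)] by blast

end
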